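(* Let $\{\phi_i\}_{i=1}^n$ be a geometrically uniform frame for $\mathbb{C}^m$ with frame operator $S=\sum_i\phi_i\phi_i^*$, and let $\mu_i=S^{-1/2}\phi_i$ be its canonical tight frame vectors. Then for every collection $\mu'_1,\dots,\mu'_n\in\mathbb{C}^m$ forming a normalized tight frame (i.e. $\sum_{i=1}^n\mu'_i\mu_i'^*=I_m$), $$\sum_{i=1}^n|\langle\phi_i,\mu'_i\rangle|^2\le\sum_{i=1}^n|\langle\phi_i,\mu_i\rangle|^2 .$$
   Context: Inner product $\langle x,y\rangle=x^*y$. A geometrically uniform (GU) frame is a set $\{\phi_i=U_i\phi\}_{i=1}^n$ spanning $\mathbb{C}^m$, where $\{U_1,\dots,U_n\}$ is an abelian group of $n$ distinct unitary $m\times m$ matrices. $S^{-1/2}$ is the positive definite square root of $S^{-1}$. A normalized tight frame is a set of vectors whose frame operator equals the identity. *)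

theory Defs
  imports "HOL-Analysis.Analysis"
begin

definition cinner :: "complex^'m \<Rightarrow> complex^'m \<Rightarrow> complex" where
  "cinner x y = (\<Sum>k\<in>UNIV. cnj (x $ k) * y $ k)"

definition cadj :: "complex^'m^'m \<Rightarrow> complex^'m^'m" where
  "cadj A = (\<chi> i j. cnj (A $ j $ i))"

definition outer :: "complex^'m \<Rightarrow> complex^'m \<Rightarrow> complex^'m^'m" where
  "outer x y = (\<chi> i j. x $ i * cnj (y $ j))"

definition unitary_mat :: "complex^'m^'m \<Rightarrow> bool" where
  "unitary_mat U \<longleftrightarrow> cadj U ** U = mat 1 \<and> U ** cadj U = mat 1"

definition pos_def_mat :: "complex^'m^'m \<Rightarrow> bool" where
  "pos_def_mat R \<longleftrightarrow> cadj R = R \<and> (\<forall>x. x \<noteq> 0 \<longrightarrow> 0 < Re (cinner x (R *v x)))"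

definition abelian_unitary_group :: "nat \<Rightarrow> (nat \<Rightarrow> complex^'m^'m) \<Rightarrow> bool" where
  "abelian_unitary_group n U \<longleftrightarrow>
     inj_on U {..<n} \<and>
     (\<forall>i<n. unitary_mat (U i)) \<and>
     mat 1 \<in> U ` {..<n} \<and>
     (\<forall>i<n. \<forall>j<n. U i ** U j \<in> U ` {..<n}) \<and>
     (\<forall>i<n. matrix_inv (U i) \<in> U ` {..<n}) \<and>
     (\<forall>i<n. \<forall>j<n. U i ** U j = U j ** U i)"

definition is_frame :: "nat \<Rightarrow> (nat \<Rightarrow> complex^'m) \<Rightarrow> bool" where
  "is_frame n phi \<longleftrightarrow> vec.span (phi ` {..<n}) = UNIV"

definition GU_frame :: "nat \<Rightarrow> (nat \<Rightarrow> complex^'m^'m) \<Rightarrow> complex^'m \<Rightarrow> (nat \<Rightarrow> complex^'m) \<Rightarrow> bool" where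
  "GU_frame n U \<phi> phi \<longleftrightarrow> abelian_unitary_group n U \<and> (\<forall>i<n. phi i = U i *v \<phi>) \<and> is_frame n phi"

definition frame_op :: "nat \<Rightarrow> (nat \<Rightarrow> complex^'m) \<Rightarrow> complex^'m^'m" where
  "frame_op n phi = (\<Sum>i<n. outer (phi i) (phi i))"

end

theory Submission
  imports Defs
begin



lemma cinner_mv: "cinner x (A *v y) = cinner (cadj A *v x) y"
  unfolding cinner_def cadj_def matrix_vector_mult_def
  by (simp add: sum_distrib_left sum_distrib_right mult_ac) (rule sum.swap)

lemma cadj_mult: "cadj (A ** B) = cadj B ** cadj A"
  unfolding cadj_def matrix_matrix_mult_def by (simp add: vec_eq_iff mult.commute)

lemma cadj_mat1: "cadj (mat 1 :: complex^'m^'m) = mat 1"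
  unfolding cadj_def mat_def by (simp add: vec_eq_iff)

lemma cadj_cadj: "cadj (cadj A) = A"
  unfolding cadj_def by (simp add: vec_eq_iff)

lemma cinner_add_right: "cinner x (y + z) = cinner x y + cinner x z"
  unfolding cinner_def by (simp add: distrib_left sum.distrib)
lemma cinner_diff_right: "cinner x (y - z) = cinner x y - cinner x z"
  unfolding cinner_def by (simp add: right_diff_distrib sum_subtractf)
lemma cinner_diff_left: "cinner (x - y) z = cinner x z - cinner y z"
  unfolding cinner_def by (simp add: left_diff_distrib sum_subtractf)
lemma cinner_scale_right: "cinner x (c *s y) = c * cinner x y"
  unfolding cinner_def by (simp add: sum_distrib_left mult_ac)
lemma cinner_scale_left: "cinner (c *s x) y = cnj c * cinner x y"
  unfolding cinner_def by (simp add: sum_distrib_left mult_ac)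
lemma cinner_cnj: "cinner y x = cnj (cinner x y)"
  unfolding cinner_def by (simp add: mult.commute)
lemma cinner_zero_left[simp]: "cinner 0 y = 0"
  unfolding cinner_def by simp

lemma cinner_self: "cinner x x = of_real (\<Sum>k\<in>UNIV. (cmod (x$k))\<^sup>2)"
proof -
  have "\<And>k. cnj (x$k) * x$k = of_real ((cmod (x$k))\<^sup>2)"
    by (metis complex_norm_square mult.commute of_real_power)
  then show ?thesis unfolding cinner_def by (simp add: of_real_sum)
qed

lemma cinner_self_Re_ge: "Re (cinner x x) \<ge> 0"
  unfolding cinner_self by (simp add: sum_nonneg)

lemma cinner_self_eq0: "cinner x x = 0 \<Longrightarrow> x = 0"
proof -
  assume "cinner x x = 0"
  then have "(\<Sum>k\<in>UNIV. (cmod (x$k))\<^sup>2) = 0" unfolding cinner_self of_real_eq_0_iff .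
  then have "\<forall>k\<in>UNIV. (cmod (x$k))\<^sup>2 = 0" by (subst (asm) sum_nonneg_eq_0_iff) auto
  then show "x = 0" by (simp add: vec_eq_iff)
qed

definition ctr :: "complex^'m^'m \<Rightarrow> complex" where
  "ctr M = (\<Sum>k\<in>UNIV. M$k$k)"

lemma ctr_comm: "ctr (X ** Y) = ctr (Y ** X)"
  unfolding ctr_def matrix_matrix_mult_def by (simp add: mult.commute) (rule sum.swap)

lemma ctr_add: "ctr (X + Y) = ctr X + ctr Y"
  unfolding ctr_def by (simp add: sum.distrib)

lemma matrix_sub_ldistrib: "(A::complex^'m^'m) ** (B - C) = A ** B - A ** C"
  unfolding matrix_matrix_mult_def by (simp add: vec_eq_iff right_diff_distrib sum_subtractf)
lemma matrix_sub_rdistrib: "((B::complex^'m^'m) - C) ** A = B ** A - C ** A"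
  unfolding matrix_matrix_mult_def by (simp add: vec_eq_iff left_diff_distrib sum_subtractf)
lemma matrix_mul_rzero': "(A::complex^'m^'m) ** 0 = 0"
  unfolding matrix_matrix_mult_def by (simp add: vec_eq_iff)
lemma cadj_diff: "cadj (A - B) = cadj A - cadj B"
  unfolding cadj_def by (simp add: vec_eq_iff)

lemma col_form:
  assumes "cadj D = D"
  shows "(\<Sum>k\<in>UNIV. cinner (column k D) (M *v column k D)) = ctr (D ** (M ** D))"
proof -
  have h: "\<And>i k. cnj (D$i$k) = D$k$i"
    using assms unfolding cadj_def by (metis vec_lambda_beta)
  show ?thesis
    unfolding ctr_def cinner_def column_def matrix_vector_mult_def matrix_matrix_mult_def
    by (simp add: h sum_distrib_left mult_ac)
qed

lemma pd_pos: "pos_def_mat A \<Longrightarrow> x \<noteq> 0 \<Longrightarrow> Re (cinner x (A *v x)) > 0"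
  unfolding pos_def_mat_def by blast




lemma sqrt_unique:
  assumes A: "pos_def_mat A" and B: "pos_def_mat B" and AB: "A ** A = B ** B"
  shows "A = B"
proof -
  define D where "D = A - B"
  have DH: "cadj D = D" using A B unfolding D_def pos_def_mat_def by (simp add: cadj_diff)
  have E: "A ** D + D ** B = 0"
    unfolding D_def matrix_sub_ldistrib matrix_sub_rdistrib using AB by simp
  have "ctr (D ** (B ** D)) = ctr (D ** (D ** B))"
    by (metis ctr_comm matrix_mul_assoc)
  then have "ctr (D ** (A ** D)) + ctr (D ** (B ** D)) = ctr (D ** (A ** D)) + ctr (D ** (D ** B))"
    by simp
  also have "\<dots> = ctr (D ** (A ** D + D ** B))" by (simp add: ctr_add matrix_add_ldistrib)
  also have "\<dots> = 0" using E by (simp add: matrix_mul_rzero' ctr_def)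
  finally have "(\<Sum>k\<in>UNIV. cinner (column k D) (A *v column k D)) + (\<Sum>k\<in>UNIV. cinner (column k D) (B *v column k D)) = 0"
    using col_form[OF DH] by simp
  then have "Re ((\<Sum>k\<in>UNIV. cinner (column k D) (A *v column k D)) + (\<Sum>k\<in>UNIV. cinner (column k D) (B *v column k D))) = 0"
    by simp
  then have "(\<Sum>k\<in>UNIV. Re (cinner (column k D) (A *v column k D)) + Re (cinner (column k D) (B *v column k D))) = 0"
    by (simp add: sum.distrib)
  moreover have ge: "\<And>k. Re (cinner (column k D) (A *v column k D)) + Re (cinner (column k D) (B *v column k D)) \<ge> 0"
  proof -
    fix k
    show "Re (cinner (column k D) (A *v column k D)) + Re (cinner (column k D) (B *v column k D)) \<ge> 0"
    proof (cases "column k D = 0")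
      case True then show ?thesis by simp
    next
      case False then show ?thesis using pd_pos[OF A False] pd_pos[OF B False] by simp
    qed
  qed
  ultimately have z: "\<And>k. Re (cinner (column k D) (A *v column k D)) + Re (cinner (column k D) (B *v column k D)) = 0"
  proof -
    fix k
    let ?F = "\<lambda>k. Re (cinner (column k D) (A *v column k D)) + Re (cinner (column k D) (B *v column k D))"
    have "sum ?F UNIV = 0" by fact
    then have "\<forall>k\<in>UNIV. ?F k = 0"
      using sum_nonneg_eq_0_iff[OF finite, of UNIV ?F] ge by blast
    then show "?F k = 0" by blast
  qed
  have c0: "\<And>k. column k D = 0"
  proof (rule ccontr)
    fix k assume nz: "column k D \<noteq> 0"
    show False using pd_pos[OF A nz] pd_pos[OF B nz] z[of k] by simp
  qed
  have dz: "\<And>i j. D $ i $ j = 0"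
  proof -
    fix i j
    have "column j D $ i = 0" using c0 by simp
    then show "D $ i $ j = 0" unfolding column_def by simp
  qed
  then have "D = 0" by (simp add: vec_eq_iff)
  then show ?thesis unfolding D_def by simp
qed




lemma cinner_add_left: "cinner (x + y) z = cinner x z + cinner y z"
  unfolding cinner_def by (simp add: distrib_right sum.distrib)

lemma mv_scale: "(A::complex^'m^'m) *v (c *s x) = c *s (A *v x)"
  unfolding matrix_vector_mult_def by (simp add: vec_eq_iff sum_distrib_left mult_ac)

lemma sum_mv: "(\<Sum>i\<in>I. M i) *v (x::complex^'m) = (\<Sum>i\<in>I. M i *v x)"
  unfolding matrix_vector_mult_def
  by (simp add: vec_eq_iff sum_distrib_right sum.swap[where A=UNIV])

lemma outer_mv: "outer y y *v x = cinner y x *s y"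
  unfolding outer_def matrix_vector_mult_def cinner_def
  by (simp add: vec_eq_iff sum_distrib_left mult_ac)

lemma mult_sum_left: "(A::complex^'m^'m) ** (\<Sum>i\<in>I. M i) = (\<Sum>i\<in>I. A ** M i)"
  unfolding matrix_matrix_mult_def
  by (simp add: vec_eq_iff sum_distrib_left sum.swap[where A=UNIV])

lemma mult_sum_right: "(\<Sum>i\<in>I. M i) ** (A::complex^'m^'m) = (\<Sum>i\<in>I. M i ** A)"
  unfolding matrix_matrix_mult_def
  by (simp add: vec_eq_iff sum_distrib_right sum.swap[where A=UNIV])

lemma outer_conj: "U ** outer x x ** cadj U = outer (U *v x) (U *v x)"
  unfolding outer_def matrix_matrix_mult_def cadj_def matrix_vector_mult_def
  by (simp add: vec_eq_iff sum_distrib_left sum_distrib_right mult_ac)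

lemma trace_form: "(\<Sum>i\<in>I. cinner (v i) (M *v v i)) = ctr (M ** (\<Sum>i\<in>I. outer (v i) (v i)))"
  unfolding ctr_def cinner_def matrix_vector_mult_def matrix_matrix_mult_def outer_def
  by (simp add: sum_distrib_left sum_distrib_right mult_ac sum.swap[where A=I])




lemma cinner_sum_right: "cinner x (\<Sum>i\<in>I. f i) = (\<Sum>i\<in>I. cinner x (f i))"
  unfolding cinner_def by (simp add: sum_distrib_left sum.swap[where A=UNIV])

lemma S_comm:
  assumes AG: "abelian_unitary_group n U" and ph: "\<forall>i<n. phi i = U i *v \<phi>" and j: "j < n"
  shows "U j ** frame_op n phi = frame_op n phi ** U j"
proof -
  have un: "cadj (U j) ** U j = mat 1" "U j ** cadj (U j) = mat 1"
    using AG j unfolding abelian_unitary_group_def unitary_mat_def by auto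
  define \<sigma> where "\<sigma> i = (SOME k. k < n \<and> U k = U j ** U i)" for i
  have \<sigma>: "\<sigma> i < n \<and> U (\<sigma> i) = U j ** U i" if "i < n" for i
  proof -
    have "U j ** U i \<in> U ` {..<n}" using AG j that unfolding abelian_unitary_group_def by auto
    then have "\<exists>k. k < n \<and> U k = U j ** U i" by force
    then show ?thesis unfolding \<sigma>_def by (rule someI_ex)
  qed
  have inj: "inj_on \<sigma> {..<n}"
  proof (rule inj_onI)
    fix a b assume a: "a \<in> {..<n}" and b: "b \<in> {..<n}" and e: "\<sigma> a = \<sigma> b"
    then have "U j ** U a = U j ** U b" using \<sigma> by (metis lessThan_iff)
    then have "cadj (U j) ** (U j ** U a) = cadj (U j) ** (U j ** U b)" by simp
    then have "U a = U b" using un by (simp add: matrix_mul_assoc)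
    then show "a = b" using AG a b unfolding abelian_unitary_group_def inj_on_def by blast
  qed
  have "\<sigma> ` {..<n} = {..<n}"
    by (rule endo_inj_surj) (use \<sigma> inj in auto)
  then have bij: "bij_betw \<sigma> {..<n} {..<n}" using inj unfolding bij_betw_def by simp
  have step: "U j *v phi i = phi (\<sigma> i)" if "i < n" for i
    using \<sigma>[OF that] ph that by (simp add: matrix_vector_mul_assoc)
  have "U j ** frame_op n phi ** cadj (U j) = (\<Sum>i<n. outer (U j *v phi i) (U j *v phi i))"
    unfolding frame_op_def mult_sum_left mult_sum_right outer_conj ..
  also have "\<dots> = (\<Sum>i<n. outer (phi (\<sigma> i)) (phi (\<sigma> i)))"
    by (rule sum.cong) (simp_all add: step)
  also have "\<dots> = frame_op n phi"
    unfolding frame_op_def by (rule sum.reindex_bij_betw[OF bij])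
  finally have c: "U j ** frame_op n phi ** cadj (U j) = frame_op n phi" .
  have "U j ** frame_op n phi = U j ** frame_op n phi ** (cadj (U j) ** U j)"
    using un by simp
  also have "\<dots> = frame_op n phi ** U j" using c by (simp add: matrix_mul_assoc)
  finally show ?thesis .
qed

lemma frame_form: "Re (cinner x (frame_op n phi *v x)) = (\<Sum>i<n. (cmod (cinner (phi i) x))\<^sup>2)"
proof -
  have "cinner x (frame_op n phi *v x) = (\<Sum>i<n. cinner (phi i) x * cinner x (phi i))"
    unfolding frame_op_def sum_mv outer_mv cinner_sum_right cinner_scale_right ..
  also have "\<dots> = (\<Sum>i<n. of_real ((cmod (cinner (phi i) x))\<^sup>2))"
    by (rule sum.cong, rule refl) (metis cinner_cnj complex_norm_square)
  finally show ?thesis by (simp add: Re_sum)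
qed

lemma frame_inv:
  assumes fr: "is_frame n phi"
  shows "invertible (frame_op n phi)"
proof -
  have "\<forall>x. frame_op n phi *v x = 0 \<longrightarrow> x = 0"
  proof (intro allI impI)
    fix x assume "frame_op n phi *v x = 0"
    then have "(\<Sum>i<n. (cmod (cinner (phi i) x))\<^sup>2) = 0" using frame_form[of x n phi] by (simp add: cinner_def)
    then have z: "\<forall>i\<in>{..<n}. (cmod (cinner (phi i) x))\<^sup>2 = 0"
      using sum_nonneg_eq_0_iff[of "{..<n}" "\<lambda>i. (cmod (cinner (phi i) x))\<^sup>2"] by simp
    have sub: "vec.subspace {y. cinner y x = 0}"
      unfolding vec.subspace_def by (simp add: cinner_add_left cinner_scale_left)
    have "phi ` {..<n} \<subseteq> {y. cinner y x = 0}" using z by auto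
    then have "vec.span (phi ` {..<n}) \<subseteq> {y. cinner y x = 0}"
      using sub by (rule vec.span_minimal)
    then have "cinner x x = 0" using fr unfolding is_frame_def by auto
    then show "x = 0" by (rule cinner_self_eq0)
  qed
  then show ?thesis
    using matrix_left_invertible_ker invertible_left_inverse by blast
qed

lemma inv_props:
  assumes "invertible (A::complex^'m^'m)"
  shows "A ** matrix_inv A = mat 1" "matrix_inv A ** A = mat 1"
proof -
  have "\<exists>A'. A ** A' = mat 1 \<and> A' ** A = mat 1" using assms unfolding invertible_def by blast
  then have "A ** matrix_inv A = mat 1 \<and> matrix_inv A ** A = mat 1"
    unfolding matrix_inv_def by (rule someI_ex)
  then show "A ** matrix_inv A = mat 1" "matrix_inv A ** A = mat 1" by auto
qed




lemma cinner_mv': "cinner (A *v x) y = cinner x (cadj A *v y)"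
  by (metis cinner_mv cadj_cadj)

lemma key_ineq:
  assumes TR: "R ** T = mat 1" and RH: "cadj R = R"
    and Tpsd: "\<forall>x. Re (cinner x (T *v x)) \<ge> 0"
    and cr: "cinner p (R *v p) = of_real r" and r: "r > 0"
  shows "(cmod (cinner p m))\<^sup>2 \<le> r * Re (cinner m (T *v m))"
proof -
  define a where "a = cinner p m"
  define d where "d = cinner m (T *v m)"
  define s where "s = a / of_real r"
  define v where "v = s *s (R *v p) - m"
  have TR': "T ** R = mat 1" using TR matrix_left_right_inverse by blast
  have Tpsi: "T *v (R *v p) = p" by (simp add: matrix_vector_mul_assoc TR')
  have e1: "cinner (R *v p) p = of_real r" using cr by (simp add: cinner_mv' RH)
  have e2: "cinner (R *v p) (T *v m) = a"
    unfolding a_def cinner_mv' RH by (simp add: matrix_vector_mul_assoc TR)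
  have e3: "cinner m p = cnj a" unfolding a_def by (rule cinner_cnj)
  have Tv: "T *v v = s *s p - T *v m"
    unfolding v_def by (simp add: matrix_vector_mult_diff_distrib mv_scale Tpsi)
  have "cinner v (T *v v) = cnj s * (s * of_real r - a) - (s * cnj a - d)"
    unfolding Tv unfolding v_def cinner_diff_left cinner_diff_right cinner_scale_left cinner_scale_right
    by (simp add: e1 e2 e3 d_def algebra_simps)
  also have "\<dots> = d - a * cnj a / of_real r"
    using r by (simp add: s_def field_simps)
  also have "\<dots> = d - of_real ((cmod a)\<^sup>2 / r)"
    by (simp add: complex_norm_square[symmetric])
  finally have "Re (cinner v (T *v v)) = Re d - (cmod a)\<^sup>2 / r" by simp
  then have "0 \<le> Re d - (cmod a)\<^sup>2 / r" using Tpsd by metis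
  then have "(cmod a)\<^sup>2 / r \<le> Re d" by simp
  then show ?thesis unfolding a_def d_def using r by (simp add: divide_le_eq mult.commute)
qed




theorem mainTheorem6:
  fixes n :: nat and U :: "nat \<Rightarrow> complex^'m^'m" and \<phi> :: "complex^'m"
    and phi :: "nat \<Rightarrow> complex^'m" and R :: "complex^'m^'m"
    and mu' :: "nat \<Rightarrow> complex^'m"
  assumes GU: "GU_frame n U \<phi> phi"
    and R_pd: "pos_def_mat R"
    and R_sq: "R ** R = matrix_inv (frame_op n phi)"
    and tight: "(\<Sum>i<n. outer (mu' i) (mu' i)) = mat 1"
  shows "(\<Sum>i<n. (cmod (cinner (phi i) (mu' i)))\<^sup>2)
           \<le> (\<Sum>i<n. (cmod (cinner (phi i) (R *v phi i)))\<^sup>2)"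
proof -
  have AG: "abelian_unitary_group n U" and ph: "\<forall>i<n. phi i = U i *v \<phi>" and fr: "is_frame n phi"
    using GU unfolding GU_frame_def by auto
  define S where "S = frame_op n phi"
  define Si where "Si = matrix_inv S"
  have SSi: "S ** Si = mat 1" "Si ** S = mat 1"
    using inv_props[OF frame_inv[OF fr]] unfolding S_def Si_def by auto
  have RH: "cadj R = R" using R_pd unfolding pos_def_mat_def by auto
  have RR: "R ** R = Si" using R_sq unfolding Si_def S_def .
  have Rc: "cadj (U j) ** R ** U j = R" if j: "j < n" for j
  proof -
    have un: "cadj (U j) ** U j = mat 1" "U j ** cadj (U j) = mat 1"
      using AG j unfolding abelian_unitary_group_def unitary_mat_def by auto
    have SU: "U j ** S = S ** U j" using S_comm[OF AG ph j] unfolding S_def .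
    have "Si ** U j = Si ** U j ** (S ** Si)" using SSi by simp
    also have "\<dots> = Si ** (U j ** S) ** Si" by (simp add: matrix_mul_assoc)
    also have "\<dots> = (Si ** S) ** U j ** Si" by (simp add: SU matrix_mul_assoc)
    also have "\<dots> = U j ** Si" using SSi by simp
    finally have SiU: "Si ** U j = U j ** Si" .
    define R' where "R' = cadj (U j) ** R ** U j"
    have "cadj R' = R'" unfolding R'_def by (simp add: cadj_mult cadj_cadj RH matrix_mul_assoc)
    moreover have "0 < Re (cinner x (R' *v x))" if "x \<noteq> 0" for x
    proof -
      have "U j *v x \<noteq> 0"
      proof
        assume "U j *v x = 0"
        then have "cadj (U j) *v (U j *v x) = 0" by simp
        then show False using that un by (simp add: matrix_vector_mul_assoc)
      qed
      then have "0 < Re (cinner (U j *v x) (R *v (U j *v x)))" by (rule pd_pos[OF R_pd])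
      moreover have "cinner x (R' *v x) = cinner (U j *v x) (R *v (U j *v x))"
        unfolding R'_def by (simp add: matrix_vector_mul_assoc[symmetric] cinner_mv')
      ultimately show ?thesis by simp
    qed
    ultimately have pR': "pos_def_mat R'" unfolding pos_def_mat_def by blast
    have "R' ** R' = cadj (U j) ** R ** (U j ** cadj (U j)) ** R ** U j"
      unfolding R'_def by (simp add: matrix_mul_assoc)
    also have "\<dots> = cadj (U j) ** R ** R ** U j" using un by simp
    also have "\<dots> = cadj (U j) ** (R ** R) ** U j" by (simp add: matrix_mul_assoc)
    also have "\<dots> = cadj (U j) ** (Si ** U j)" using RR by (simp add: matrix_mul_assoc)
    also have "\<dots> = Si" using un SiU by (simp add: matrix_mul_assoc)
    finally have "R' ** R' = R ** R" using RR by simp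
    then show ?thesis using sqrt_unique[OF pR' R_pd] unfolding R'_def by simp
  qed
  define c where "c = cinner \<phi> (R *v \<phi>)"
  have cconst: "cinner (phi i) (R *v phi i) = c" if "i < n" for i
  proof -
    have "cinner (phi i) (R *v phi i) = cinner \<phi> (cadj (U i) *v (R *v (U i *v \<phi>)))"
      using ph that by (simp add: cinner_mv')
    also have "\<dots> = cinner \<phi> ((cadj (U i) ** R ** U i) *v \<phi>)"
      by (simp add: matrix_vector_mul_assoc matrix_mul_assoc)
    finally show ?thesis using Rc[OF that] unfolding c_def by simp
  qed
  define r where "r = Re c"
  have "cnj c = c" unfolding c_def by (metis cinner_cnj cinner_mv' RH)
  then have cr: "c = of_real r" unfolding r_def by (metis Reals_cnj_iff complex_is_Real_iff of_real_Re)
  have phinz: "\<phi> \<noteq> 0"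
  proof
    assume "\<phi> = 0"
    then have "phi ` {..<n} \<subseteq> {y. y = 0}" using ph by auto
    moreover have "vec.subspace {y::complex^'m. y = 0}" unfolding vec.subspace_def by simp
    ultimately have "vec.span (phi ` {..<n}) \<subseteq> {y. y = 0}" by (rule vec.span_minimal)
    then have "(1::complex^'m) = 0" using fr unfolding is_frame_def by auto
    then show False by (simp add: vec_eq_iff)
  qed
  have rpos: "r > 0" unfolding r_def c_def by (rule pd_pos[OF R_pd phinz])
  define T where "T = R ** S"
  have RT: "R ** T = mat 1" unfolding T_def by (simp add: matrix_mul_assoc RR SSi)
  have TR: "T ** R = mat 1" using RT matrix_left_right_inverse by blast
  have "cadj T ** R = mat 1"
    using RT by (metis RH cadj_mult cadj_mat1)
  then have TH: "cadj T = T" by (metis RT matrix_mul_assoc matrix_mul_lid matrix_mul_rid)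
  have Tpsd: "\<forall>x. Re (cinner x (T *v x)) \<ge> 0"
  proof
    fix x
    have "T *v x = T *v (R *v (T *v x))" by (simp add: matrix_vector_mul_assoc matrix_mul_assoc TR)
    then have "cinner x (T *v x) = cinner (T *v x) (R *v (T *v x))"
      by (metis TH cinner_mv)
    moreover have "Re (cinner (T *v x) (R *v (T *v x))) \<ge> 0"
      by (cases "T *v x = 0") (auto simp: cinner_def dest: pd_pos[OF R_pd] intro: less_imp_le)
    ultimately show "Re (cinner x (T *v x)) \<ge> 0" by simp
  qed
  have each: "(cmod (cinner (phi i) (mu' i)))\<^sup>2 \<le> r * Re (cinner (mu' i) (T *v mu' i))" if "i < n" for i
    by (rule key_ineq[OF RT RH Tpsd _ rpos]) (use cconst[OF that] cr in simp)
  have "(\<Sum>i<n. (cmod (cinner (phi i) (mu' i)))\<^sup>2) \<le> (\<Sum>i<n. r * Re (cinner (mu' i) (T *v mu' i)))"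
    by (rule sum_mono) (simp add: each)
  also have "\<dots> = r * Re (\<Sum>i<n. cinner (mu' i) (T *v mu' i))"
    by (simp add: sum_distrib_left Re_sum)
  also have "(\<Sum>i<n. cinner (mu' i) (T *v mu' i)) = ctr T"
    using trace_form[of mu' T "{..<n}"] tight by simp
  also have "ctr T = (\<Sum>i<n. cinner (phi i) (R *v phi i))"
    using trace_form[of phi R "{..<n}"] unfolding T_def S_def frame_op_def by simp
  also have "\<dots> = (\<Sum>i<n. c)" by (rule sum.cong) (simp_all add: cconst)
  also have "r * Re (\<Sum>i<n. c) = (\<Sum>i<n. (cmod (cinner (phi i) (R *v phi i)))\<^sup>2)"
  proof -
    have "(\<Sum>i<n. (cmod (cinner (phi i) (R *v phi i)))\<^sup>2) = (\<Sum>i<n. r\<^sup>2)"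
      by (rule sum.cong) (simp_all add: cconst cr)
    then show ?thesis using cr by (simp add: power2_eq_square)
  qed
  finally show ?thesis .
qed


end
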